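(* For every integer $n\ge3$, $$\gamma_{tr3}(P_3\square P_n)=\begin{cases}\left\lceil\frac{8n}{3}\right\rceil+1, & n\equiv0\pmod 3,\\[1mm] \left\lceil\frac{8n}{3}\right\rceil, & n\equiv1,2\pmod 3.\end{cases}$$
   Context: $P_m$ denotes the directed path with vertex set $\{0,1,\dots,m-1\}$ and arcs $(i,i+1)$ for $0\le i\le m-2$. The Cartesian product $D_1\square D_2$ has vertex set $V(D_1)\times V(D_2)$, with an arc from $(x_1,y_1)$ to $(x_2,y_2)$ iff either $(x_1,x_2)$ is an arc of $D_1$ and $y_1=y_2$, or $x_1=x_2$ and $(y_1,y_2)$ is an arc of $D_2$. For a digraph $D$ and positive integer $k$, a $k$-rainbow dominating function on $D$ is $f:V(D)\to\mathcal P(\{1,\dots,k\})$ such that every $v$ with $f(v)=\emptyset$ satisfies $\bigcup_{u\in N^-(v)}f(u)=\{1,\dots,k\}$, where $N^-(v)$ is the set of in-neighbors of $v$; its weight is $\sum_v|f(v)|$. It is total if additionally the subdigraph induced by $\{v:f(v)\ne\emptyset\}$ has no isolated vertex (a vertex with neither in- nor out-neighbors in it). $\gamma_{trk}(D)$ is the minimum weight of a total $k$-rainbow dominating function. *)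

theory Defs
  imports Complex_Main
begin

definition in_nbrs :: "('v \<times> 'v) set \<Rightarrow> 'v \<Rightarrow> 'v set" where
  "in_nbrs A v = {u. (u, v) \<in> A}"

definition path_verts :: "nat \<Rightarrow> nat set" where
  "path_verts m = {0..<m}"

definition path_arcs :: "nat \<Rightarrow> (nat \<times> nat) set" where
  "path_arcs m = {(i, i + 1) | i. i + 1 < m}"

definition cart_verts :: "'a set \<Rightarrow> 'b set \<Rightarrow> ('a \<times> 'b) set" where
  "cart_verts V1 V2 = V1 \<times> V2"

definition cart_arcs :: "'a set \<Rightarrow> ('a \<times> 'a) set \<Rightarrow> 'b set \<Rightarrow> ('b \<times> 'b) set
    \<Rightarrow> (('a \<times> 'b) \<times> ('a \<times> 'b)) set" where
  "cart_arcs V1 A1 V2 A2 =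
     {((x1, y1), (x2, y2)) | x1 y1 x2 y2.
        (x1, y1) \<in> V1 \<times> V2 \<and> (x2, y2) \<in> V1 \<times> V2 \<and>
        (((x1, x2) \<in> A1 \<and> y1 = y2) \<or> (x1 = x2 \<and> (y1, y2) \<in> A2))}"

text \<open>k-rainbow dominating function (values outside V are irrelevant and fixed to {}).\<close>
definition rainbow_dom :: "'v set \<Rightarrow> ('v \<times> 'v) set \<Rightarrow> nat \<Rightarrow> ('v \<Rightarrow> nat set) \<Rightarrow> bool" where
  "rainbow_dom V A k f \<longleftrightarrow>
     (\<forall>v. v \<notin> V \<longrightarrow> f v = {}) \<and>
     (\<forall>v\<in>V. f v \<subseteq> {1..k}) \<and>
     (\<forall>v\<in>V. f v = {} \<longrightarrow> (\<Union>u\<in>in_nbrs A v \<inter> V. f u) = {1..k})"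

text \<open>Total: the subdigraph induced by the vertices with nonempty label has no isolated vertex.\<close>
definition total_rainbow_dom :: "'v set \<Rightarrow> ('v \<times> 'v) set \<Rightarrow> nat \<Rightarrow> ('v \<Rightarrow> nat set) \<Rightarrow> bool" where
  "total_rainbow_dom V A k f \<longleftrightarrow>
     rainbow_dom V A k f \<and>
     (\<forall>v\<in>V. f v \<noteq> {} \<longrightarrow>
        (\<exists>u\<in>V. u \<noteq> v \<and> f u \<noteq> {} \<and> ((u, v) \<in> A \<or> (v, u) \<in> A)))"

definition rd_weight :: "'v set \<Rightarrow> ('v \<Rightarrow> nat set) \<Rightarrow> nat" where
  "rd_weight V f = (\<Sum>v\<in>V. card (f v))"

definition gamma_trk :: "'v set \<Rightarrow> ('v \<times> 'v) set \<Rightarrow> nat \<Rightarrow> nat" where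
  "gamma_trk V A k = Min {rd_weight V f | f. total_rainbow_dom V A k f}"

end

theory Submission
  imports Defs
begin

datatype v = V0 | V1 | V2 | V3

fun nv :: "v \<Rightarrow> nat" where
  "nv V0 = 0" | "nv V1 = 1" | "nv V2 = 2" | "nv V3 = 3"

type_synonym col = "v \<times> v \<times> v"
type_synonym flg = "bool \<times> bool \<times> bool"

fun domok :: "bool \<Rightarrow> col \<Rightarrow> col \<Rightarrow> bool" where
  "domok hp (p0,p1,p2) (c0,c1,c2) =
     ((c0 = V0 \<longrightarrow> 3 \<le> (if hp then nv p0 else 0)) \<and>
     (c1 = V0 \<longrightarrow> 3 \<le> nv c0 + (if hp then nv p1 else 0)) \<and>
     (c2 = V0 \<longrightarrow> 3 \<le> nv c1 + (if hp then nv p2 else 0)))"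

fun flags :: "bool \<Rightarrow> col \<Rightarrow> col \<Rightarrow> flg" where
  "flags hp (p0,p1,p2) (c0,c1,c2) =
     (c0 \<noteq> V0 \<and> (c1 \<noteq> V0 \<or> hp \<and> p0 \<noteq> V0),
      c1 \<noteq> V0 \<and> (c0 \<noteq> V0 \<or> c2 \<noteq> V0 \<or> hp \<and> p1 \<noteq> V0),
      c2 \<noteq> V0 \<and> (c1 \<noteq> V0 \<or> hp \<and> p2 \<noteq> V0))"

fun pendok :: "col \<Rightarrow> flg \<Rightarrow> col \<Rightarrow> bool" where
  "pendok (p0,p1,p2) (s0,s1,s2) (c0,c1,c2) =
     ((p0 \<noteq> V0 \<and> \<not> s0 \<longrightarrow> c0 \<noteq> V0) \<and> (p1 \<noteq> V0 \<and> \<not> s1 \<longrightarrow> c1 \<noteq> V0) \<and> (p2 \<noteq> V0 \<and> \<not> s2 \<longrightarrow> c2 \<noteq> V0))"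

fun finok :: "col \<Rightarrow> flg \<Rightarrow> bool" where
  "finok (c0,c1,c2) (s0,s1,s2) =
     ((c0 \<noteq> V0 \<longrightarrow> s0) \<and> (c1 \<noteq> V0 \<longrightarrow> s1) \<and> (c2 \<noteq> V0 \<longrightarrow> s2))"

fun cw :: "col \<Rightarrow> nat" where
  "cw (c0,c1,c2) = nv c0 + nv c1 + nv c2"

fun sel8 :: "int \<Rightarrow> int \<Rightarrow> int \<Rightarrow> int \<Rightarrow> int \<Rightarrow> int \<Rightarrow> int \<Rightarrow> int \<Rightarrow> flg \<Rightarrow> int" where
  "sel8 x0 x1 x2 x3 x4 x5 x6 x7 (s0,s1,s2) = (if s0 then (if s1 then (if s2 then x7 else x6) else (if s2 then x5 else x4))
     else (if s1 then (if s2 then x3 else x2) else (if s2 then x1 else x0)))"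

fun pot :: "col \<Rightarrow> flg \<Rightarrow> int" where
  "pot (V0,V0,V0) s = sel8 (11) (1000) (1000) (1000) (1000) (1000) (1000) (1000) s"
| "pot (V0,V0,V1) s = sel8 (5) (8) (1000) (1000) (1000) (1000) (1000) (1000) s"
| "pot (V0,V0,V2) s = sel8 (8) (11) (1000) (1000) (1000) (1000) (1000) (1000) s"
| "pot (V0,V0,V3) s = sel8 (11) (14) (1000) (1000) (1000) (1000) (1000) (1000) s"
| "pot (V0,V1,V0) s = sel8 (2) (1000) (5) (1000) (1000) (1000) (1000) (1000) s"
| "pot (V0,V1,V1) s = sel8 (1000) (1000) (1000) (2) (1000) (1000) (1000) (1000) s"
| "pot (V0,V1,V2) s = sel8 (1000) (1000) (1000) (5) (1000) (1000) (1000) (1000) s"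
| "pot (V0,V1,V3) s = sel8 (1000) (1000) (1000) (8) (1000) (1000) (1000) (1000) s"
| "pot (V0,V2,V0) s = sel8 (2) (1000) (5) (1000) (1000) (1000) (1000) (1000) s"
| "pot (V0,V2,V1) s = sel8 (1000) (1000) (1000) (5) (1000) (1000) (1000) (1000) s"
| "pot (V0,V2,V2) s = sel8 (1000) (1000) (1000) (8) (1000) (1000) (1000) (1000) s"
| "pot (V0,V2,V3) s = sel8 (1000) (1000) (1000) (11) (1000) (1000) (1000) (1000) s"
| "pot (V0,V3,V0) s = sel8 (5) (1000) (8) (1000) (1000) (1000) (1000) (1000) s"
| "pot (V0,V3,V1) s = sel8 (1000) (1000) (1000) (8) (1000) (1000) (1000) (1000) s"
| "pot (V0,V3,V2) s = sel8 (1000) (1000) (1000) (11) (1000) (1000) (1000) (1000) s"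
| "pot (V0,V3,V3) s = sel8 (1000) (1000) (1000) (14) (1000) (1000) (1000) (1000) s"
| "pot (V1,V0,V0) s = sel8 (6) (1000) (1000) (1000) (5) (1000) (1000) (1000) s"
| "pot (V1,V0,V1) s = sel8 (3) (3) (1000) (1000) (0) (2) (1000) (1000) s"
| "pot (V1,V0,V2) s = sel8 (6) (6) (1000) (1000) (3) (5) (1000) (1000) s"
| "pot (V1,V0,V3) s = sel8 (9) (9) (1000) (1000) (6) (8) (1000) (1000) s"
| "pot (V1,V1,V0) s = sel8 (1000) (1000) (1000) (1000) (1000) (1000) (2) (1000) s"
| "pot (V1,V1,V1) s = sel8 (1000) (1000) (1000) (1000) (1000) (1000) (1000) (1) s"
| "pot (V1,V1,V2) s = sel8 (1000) (1000) (1000) (1000) (1000) (1000) (1000) (4) s"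
| "pot (V1,V1,V3) s = sel8 (1000) (1000) (1000) (1000) (1000) (1000) (1000) (7) s"
| "pot (V1,V2,V0) s = sel8 (1000) (1000) (1000) (1000) (1000) (1000) (2) (1000) s"
| "pot (V1,V2,V1) s = sel8 (1000) (1000) (1000) (1000) (1000) (1000) (1000) (4) s"
| "pot (V1,V2,V2) s = sel8 (1000) (1000) (1000) (1000) (1000) (1000) (1000) (7) s"
| "pot (V1,V2,V3) s = sel8 (1000) (1000) (1000) (1000) (1000) (1000) (1000) (10) s"
| "pot (V1,V3,V0) s = sel8 (1000) (1000) (1000) (1000) (1000) (1000) (4) (1000) s"
| "pot (V1,V3,V1) s = sel8 (1000) (1000) (1000) (1000) (1000) (1000) (1000) (7) s"
| "pot (V1,V3,V2) s = sel8 (1000) (1000) (1000) (1000) (1000) (1000) (1000) (10) s"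
| "pot (V1,V3,V3) s = sel8 (1000) (1000) (1000) (1000) (1000) (1000) (1000) (13) s"
| "pot (V2,V0,V0) s = sel8 (6) (1000) (1000) (1000) (5) (1000) (1000) (1000) s"
| "pot (V2,V0,V1) s = sel8 (6) (3) (1000) (1000) (3) (2) (1000) (1000) s"
| "pot (V2,V0,V2) s = sel8 (9) (6) (1000) (1000) (6) (5) (1000) (1000) s"
| "pot (V2,V0,V3) s = sel8 (12) (9) (1000) (1000) (9) (8) (1000) (1000) s"
| "pot (V2,V1,V0) s = sel8 (1000) (1000) (1000) (1000) (1000) (1000) (5) (1000) s"
| "pot (V2,V1,V1) s = sel8 (1000) (1000) (1000) (1000) (1000) (1000) (1000) (4) s"
| "pot (V2,V1,V2) s = sel8 (1000) (1000) (1000) (1000) (1000) (1000) (1000) (7) s"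
| "pot (V2,V1,V3) s = sel8 (1000) (1000) (1000) (1000) (1000) (1000) (1000) (10) s"
| "pot (V2,V2,V0) s = sel8 (1000) (1000) (1000) (1000) (1000) (1000) (5) (1000) s"
| "pot (V2,V2,V1) s = sel8 (1000) (1000) (1000) (1000) (1000) (1000) (1000) (7) s"
| "pot (V2,V2,V2) s = sel8 (1000) (1000) (1000) (1000) (1000) (1000) (1000) (10) s"
| "pot (V2,V2,V3) s = sel8 (1000) (1000) (1000) (1000) (1000) (1000) (1000) (13) s"
| "pot (V2,V3,V0) s = sel8 (1000) (1000) (1000) (1000) (1000) (1000) (7) (1000) s"
| "pot (V2,V3,V1) s = sel8 (1000) (1000) (1000) (1000) (1000) (1000) (1000) (10) s"
| "pot (V2,V3,V2) s = sel8 (1000) (1000) (1000) (1000) (1000) (1000) (1000) (13) s"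
| "pot (V2,V3,V3) s = sel8 (1000) (1000) (1000) (1000) (1000) (1000) (1000) (16) s"
| "pot (V3,V0,V0) s = sel8 (9) (1000) (1000) (1000) (8) (1000) (1000) (1000) s"
| "pot (V3,V0,V1) s = sel8 (4) (6) (1000) (1000) (6) (4) (1000) (1000) s"
| "pot (V3,V0,V2) s = sel8 (7) (9) (1000) (1000) (9) (7) (1000) (1000) s"
| "pot (V3,V0,V3) s = sel8 (10) (12) (1000) (1000) (12) (10) (1000) (1000) s"
| "pot (V3,V1,V0) s = sel8 (1000) (1000) (1000) (1000) (1000) (1000) (8) (1000) s"
| "pot (V3,V1,V1) s = sel8 (1000) (1000) (1000) (1000) (1000) (1000) (1000) (7) s"
| "pot (V3,V1,V2) s = sel8 (1000) (1000) (1000) (1000) (1000) (1000) (1000) (10) s"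
| "pot (V3,V1,V3) s = sel8 (1000) (1000) (1000) (1000) (1000) (1000) (1000) (13) s"
| "pot (V3,V2,V0) s = sel8 (1000) (1000) (1000) (1000) (1000) (1000) (8) (1000) s"
| "pot (V3,V2,V1) s = sel8 (1000) (1000) (1000) (1000) (1000) (1000) (1000) (10) s"
| "pot (V3,V2,V2) s = sel8 (1000) (1000) (1000) (1000) (1000) (1000) (1000) (13) s"
| "pot (V3,V2,V3) s = sel8 (1000) (1000) (1000) (1000) (1000) (1000) (1000) (16) s"
| "pot (V3,V3,V0) s = sel8 (1000) (1000) (1000) (1000) (1000) (1000) (10) (1000) s"
| "pot (V3,V3,V1) s = sel8 (1000) (1000) (1000) (1000) (1000) (1000) (1000) (13) s"
| "pot (V3,V3,V2) s = sel8 (1000) (1000) (1000) (1000) (1000) (1000) (1000) (16) s"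
| "pot (V3,V3,V3) s = sel8 (1000) (1000) (1000) (1000) (1000) (1000) (1000) (19) s"

definition vals :: "v list" where "vals = [V0,V1,V2,V3]"
definition cols :: "col list" where "cols = List.product vals (List.product vals vals)"
definition flgs :: "flg list" where "flgs = List.product [False,True] (List.product [False,True] [False,True])"

definition chk_init :: bool where
  "chk_init = list_all (\<lambda>c. domok False c c \<longrightarrow>
      pot c (flags False c c) < 1000 \<and> pot c (flags False c c) \<le> 3 * int (cw c) - 8) cols"

definition chk_fin :: bool where
  "chk_fin = list_all (\<lambda>c. list_all (\<lambda>s. pot c s < 1000 \<and> finok c s \<longrightarrow> 1 \<le> pot c s) flgs) cols"

definition chk_step :: bool where
  "chk_step = list_all (\<lambda>p. list_all (\<lambda>s. pot p s < 1000 \<longrightarrow> list_all (\<lambda>c.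
      domok True p c \<and> pendok p s c \<longrightarrow>
      pot c (flags True p c) < 1000 \<and> pot c (flags True p c) \<le> pot p s + 3 * int (cw c) - 8) cols) flgs) cols"

lemma chk_init_ok: chk_init by code_simp
lemma chk_fin_ok: chk_fin by code_simp
lemma chk_step_ok: chk_step by code_simp

lemma set_vals: "set vals = UNIV"
  by (auto simp: vals_def intro: v.exhaust)

lemma set_cols: "set cols = UNIV"
  by (auto simp: cols_def set_vals)

lemma set_flgs: "set flgs = UNIV"
  by (auto simp: flgs_def)

lemma init_lem: "domok False c c \<Longrightarrow> pot c (flags False c c) < 1000 \<and> pot c (flags False c c) \<le> 3 * int (cw c) - 8"
  using chk_init_ok unfolding chk_init_def list_all_iff set_cols by blast

lemma fin_lem: "pot c s < 1000 \<Longrightarrow> finok c s \<Longrightarrow> 1 \<le> pot c s"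
  using chk_fin_ok unfolding chk_fin_def list_all_iff set_cols set_flgs by blast

lemma step_lem: "pot p s < 1000 \<Longrightarrow> domok True p c \<Longrightarrow> pendok p s c \<Longrightarrow>
   pot c (flags True p c) < 1000 \<and> pot c (flags True p c) \<le> pot p s + 3 * int (cw c) - 8"
  using chk_step_ok unfolding chk_step_def list_all_iff set_cols set_flgs by blast

definition tov :: "nat \<Rightarrow> v" where
  "tov k = (if k = 0 then V0 else if k = 1 then V1 else if k = 2 then V2 else V3)"

lemma nv_tov: "k \<le> 3 \<Longrightarrow> nv (tov k) = k"
  by (auto simp: tov_def)

lemma tov_V0: "(tov k = V0) = (k = 0)"
  by (auto simp: tov_def)

definition colv :: "(nat \<Rightarrow> nat \<Rightarrow> nat) \<Rightarrow> nat \<Rightarrow> col" where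
  "colv c y = (tov (c 0 y), tov (c 1 y), tov (c 2 y))"

lemma abstract_lb:
  fixes c :: "nat \<Rightarrow> nat \<Rightarrow> nat" and n :: nat
  assumes n: "n \<ge> 1"
  and B: "\<And>x y. x < 3 \<Longrightarrow> y < n \<Longrightarrow> c x y \<le> 3"
  and D: "\<And>x y. x < 3 \<Longrightarrow> y < n \<Longrightarrow> c x y = 0 \<Longrightarrow>
            3 \<le> (if x > 0 then c (x-1) y else 0) + (if y > 0 then c x (y-1) else 0)"
  and T: "\<And>x y. x < 3 \<Longrightarrow> y < n \<Longrightarrow> c x y \<noteq> 0 \<Longrightarrow>
            (x > 0 \<and> c (x-1) y \<noteq> 0) \<or> (x < 2 \<and> c (x+1) y \<noteq> 0) \<or>
            (y > 0 \<and> c x (y-1) \<noteq> 0) \<or> (y + 1 < n \<and> c x (y+1) \<noteq> 0)"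
  shows "8 * n + 1 \<le> 3 * (\<Sum>y<n. c 0 y + c 1 y + c 2 y)"
proof -
  define fl where "fl y = flags (0 < y) (colv c (y-1)) (colv c y)" for y
  have cw_eq: "cw (colv c y) = c 0 y + c 1 y + c 2 y" if "y < n" for y
    using B[of 0 y] B[of 1 y] B[of 2 y] that by (simp add: colv_def nv_tov)
  have dom: "domok (0 < y) (colv c (y-1)) (colv c y)" if "y < n" for y
  proof -
    have d0: "c 0 y = 0 \<Longrightarrow> 3 \<le> (if 0 < y then c 0 (y-1) else 0)" using D[of 0 y] that by simp
    have d1: "c 1 y = 0 \<Longrightarrow> 3 \<le> c 0 y + (if 0 < y then c 1 (y-1) else 0)" using D[of 1 y] that by simp
    have d2: "c 2 y = 0 \<Longrightarrow> 3 \<le> c 1 y + (if 0 < y then c 2 (y-1) else 0)" using D[of 2 y] that by simp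
    have bb: "\<And>x. x < 3 \<Longrightarrow> 0 < y \<Longrightarrow> c x (y-1) \<le> 3" using B that by simp
    show ?thesis using d0 d1 d2 bb[of 0] bb[of 1] bb[of 2] B[of 0 y] B[of 1 y] B[of 2 y] that
      by (cases "c 0 y = 0"; cases "c 1 y = 0"; cases "c 2 y = 0"; auto simp: colv_def nv_tov tov_V0 split: if_splits)
  qed
  have pend: "pendok (colv c y) (fl y) (colv c (y+1))" if "y + 1 < n" for y
  proof -
    have t0: "c 0 y \<noteq> 0 \<Longrightarrow> c 1 y \<noteq> 0 \<or> (y > 0 \<and> c 0 (y-1) \<noteq> 0) \<or> c 0 (y+1) \<noteq> 0"
      using T[of 0 y] that by auto
    have t1: "c 1 y \<noteq> 0 \<Longrightarrow> c 0 y \<noteq> 0 \<or> c 2 y \<noteq> 0 \<or> (y > 0 \<and> c 1 (y-1) \<noteq> 0) \<or> c 1 (y+1) \<noteq> 0"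
      using T[of 1 y] that by (auto simp: numeral_2_eq_2)
    have t2: "c 2 y \<noteq> 0 \<Longrightarrow> c 1 y \<noteq> 0 \<or> (y > 0 \<and> c 2 (y-1) \<noteq> 0) \<or> c 2 (y+1) \<noteq> 0"
      using T[of 2 y] that by auto
    show ?thesis using t0 t1 t2 by (auto simp: fl_def colv_def tov_V0)
  qed
  have fin: "finok (colv c (n-1)) (fl (n-1))"
  proof -
    have t0: "c 0 (n-1) \<noteq> 0 \<Longrightarrow> c 1 (n-1) \<noteq> 0 \<or> (n-1 > 0 \<and> c 0 (n-1-1) \<noteq> 0)"
      using T[of 0 "n-1"] n by auto
    have t1: "c 1 (n-1) \<noteq> 0 \<Longrightarrow> c 0 (n-1) \<noteq> 0 \<or> c 2 (n-1) \<noteq> 0 \<or> (n-1 > 0 \<and> c 1 (n-1-1) \<noteq> 0)"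
      using T[of 1 "n-1"] n by (auto simp: numeral_2_eq_2)
    have t2: "c 2 (n-1) \<noteq> 0 \<Longrightarrow> c 1 (n-1) \<noteq> 0 \<or> (n-1 > 0 \<and> c 2 (n-1-1) \<noteq> 0)"
      using T[of 2 "n-1"] n by auto
    show ?thesis using t0 t1 t2 by (auto simp: fl_def colv_def tov_V0)
  qed
  have inv: "pot (colv c y) (fl y) < 1000 \<and>
      pot (colv c y) (fl y) + 8 * (int y + 1) \<le> 3 * int (\<Sum>j<Suc y. c 0 j + c 1 j + c 2 j)"
    if "y < n" for y
    using that
  proof (induction y)
    case 0
    have "domok False (colv c 0) (colv c 0)" using dom[of 0] 0 by simp
    from init_lem[OF this] show ?case using cw_eq[of 0] 0 by (simp add: fl_def)
  next
    case (Suc y)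
    have IH: "pot (colv c y) (fl y) < 1000 \<and>
      pot (colv c y) (fl y) + 8 * (int y + 1) \<le> 3 * int (\<Sum>j<Suc y. c 0 j + c 1 j + c 2 j)"
      using Suc by simp
    have d: "domok True (colv c y) (colv c (Suc y))" using dom[of "Suc y"] Suc.prems by simp
    have pe: "pendok (colv c y) (fl y) (colv c (Suc y))" using pend[of y] Suc.prems by simp
    have fS: "fl (Suc y) = flags True (colv c y) (colv c (Suc y))" by (simp add: fl_def)
    have st: "pot (colv c (Suc y)) (fl (Suc y)) < 1000 \<and>
       pot (colv c (Suc y)) (fl (Suc y)) \<le> pot (colv c y) (fl y) + 3 * int (cw (colv c (Suc y))) - 8"
      unfolding fS using step_lem[OF conjunct1[OF IH] d pe] .
    show ?case using st IH cw_eq[OF Suc.prems] by simp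
  qed
  have "pot (colv c (n-1)) (fl (n-1)) < 1000 \<and>
      pot (colv c (n-1)) (fl (n-1)) + 8 * (int (n-1) + 1) \<le> 3 * int (\<Sum>j<Suc (n-1). c 0 j + c 1 j + c 2 j)"
    using inv[of "n-1"] n by simp
  moreover have "1 \<le> pot (colv c (n-1)) (fl (n-1))" using fin_lem fin calculation by blast
  ultimately have "1 + 8 * (int (n-1) + 1) \<le> 3 * int (\<Sum>j<n. c 0 j + c 1 j + c 2 j)"
    using n by simp
  then have "int (8 * n + 1) \<le> int (3 * (\<Sum>j<n. c 0 j + c 1 j + c 2 j))" using n by (simp add: of_nat_diff)
  then show ?thesis by (simp only: of_nat_le_iff)
qed

abbreviation VV :: "nat \<Rightarrow> (nat \<times> nat) set" where
  "VV n \<equiv> cart_verts (path_verts 3) (path_verts n)"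
abbreviation AA :: "nat \<Rightarrow> ((nat \<times> nat) \<times> (nat \<times> nat)) set" where
  "AA n \<equiv> cart_arcs (path_verts 3) (path_arcs 3) (path_verts n) (path_arcs n)"

lemma VV_eq: "VV n = {0..<3} \<times> {0..<n}"
  by (simp add: cart_verts_def path_verts_def)

lemma arc_iff: "(((a,b),(c,d)) \<in> AA n) = (a < 3 \<and> c < 3 \<and> b < n \<and> d < n \<and>
    ((c = a + 1 \<and> d = b) \<or> (c = a \<and> d = b + 1)))"
  by (auto simp: cart_arcs_def path_verts_def path_arcs_def)

lemma weight_eq: "rd_weight (VV n) f = (\<Sum>y<n. card (f (0,y)) + card (f (1,y)) + card (f (2,y)))"
proof -
  have "rd_weight (VV n) f = (\<Sum>x\<in>{0..<3}. \<Sum>y\<in>{0..<n}. card (f (x,y)))"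
    unfolding rd_weight_def VV_eq by (simp add: sum.cartesian_product)
  also have "\<dots> = (\<Sum>y\<in>{0..<n}. \<Sum>x\<in>{0..<3}. card (f (x,y)))"
    by (rule sum.swap)
  also have "\<dots> = (\<Sum>y<n. card (f (0,y)) + card (f (1,y)) + card (f (2,y)))"
    by (simp add: atLeast0LessThan eval_nat_numeral)
  finally show ?thesis .
qed

lemma lower:
  assumes n: "n \<ge> 1" and tot: "total_rainbow_dom (VV n) (AA n) 3 f"
  shows "8 * n + 1 \<le> 3 * rd_weight (VV n) f"
proof -
  have rd: "rainbow_dom (VV n) (AA n) 3 f" using tot by (simp add: total_rainbow_dom_def)
  have sub: "f (x,y) \<subseteq> {1..3}" if "x < 3" "y < n" for x y
    using rd that by (auto simp: rainbow_dom_def VV_eq)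
  have finf: "finite (f (x,y))" if "x < 3" "y < n" for x y
    using sub[OF that] finite_subset by blast
  have crd: "card (f (x,y)) \<le> 3" if "x < 3" "y < n" for x y
    using card_mono[OF _ sub[OF that]] by simp
  have c0: "(card (f (x,y)) = 0) = (f (x,y) = {})" if "x < 3" "y < n" for x y
    using finf[OF that] by simp
  define c where "c x y = card (f (x,y))" for x y
  have B: "\<And>x y. x < 3 \<Longrightarrow> y < n \<Longrightarrow> c x y \<le> 3" using crd by (simp add: c_def)
  have D: "3 \<le> (if x > 0 then c (x-1) y else 0) + (if y > 0 then c x (y-1) else 0)"
    if xy: "x < 3" "y < n" and z: "c x y = 0" for x y
  proof -
    have e: "f (x,y) = {}" using z c0[OF xy] by (simp add: c_def)
    have U: "(\<Union>u\<in>in_nbrs (AA n) (x,y) \<inter> VV n. f u) = {1..3}"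
      using rd xy e by (auto simp: rainbow_dom_def VV_eq)
    define R where "R = (if x > 0 then f (x-1,y) else {}) \<union> (if y > 0 then f (x,y-1) else {})"
    have "(\<Union>u\<in>in_nbrs (AA n) (x,y) \<inter> VV n. f u) \<subseteq> R"
    proof
      fix z assume "z \<in> (\<Union>u\<in>in_nbrs (AA n) (x,y) \<inter> VV n. f u)"
      then obtain a b where ab: "((a,b),(x,y)) \<in> AA n" "z \<in> f (a,b)"
        by (auto simp: in_nbrs_def)
      then show "z \<in> R" unfolding arc_iff R_def by auto
    qed
    then have sR: "{1..3::nat} \<subseteq> R" using U by simp
    have fR: "finite R" unfolding R_def using finf xy by auto
    have "3 = card {1..3::nat}" by simp
    also have "\<dots> \<le> card R" using card_mono[OF fR sR] .
    also have "\<dots> \<le> card (if x > 0 then f (x-1,y) else {}) + card (if y > 0 then f (x,y-1) else {})"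
      unfolding R_def by (rule card_Un_le)
    also have "\<dots> = (if x > 0 then c (x-1) y else 0) + (if y > 0 then c x (y-1) else 0)"
      by (simp add: c_def)
    finally show ?thesis .
  qed
  have T: "(x > 0 \<and> c (x-1) y \<noteq> 0) \<or> (x < 2 \<and> c (x+1) y \<noteq> 0) \<or>
            (y > 0 \<and> c x (y-1) \<noteq> 0) \<or> (y + 1 < n \<and> c x (y+1) \<noteq> 0)"
    if xy: "x < 3" "y < n" and nz: "c x y \<noteq> 0" for x y
  proof -
    have ne: "f (x,y) \<noteq> {}" using nz c0[OF xy] by (simp add: c_def)
    have "(x,y) \<in> VV n" using xy by (simp add: VV_eq)
    then obtain a b where ab: "(a,b) \<in> VV n" "(a,b) \<noteq> (x,y)" "f (a,b) \<noteq> {}"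
        "((a,b),(x,y)) \<in> AA n \<or> ((x,y),(a,b)) \<in> AA n"
      using tot ne unfolding total_rainbow_dom_def by fastforce
    have cab: "c a b \<noteq> 0" using ab(1,3) c0[of a b] by (simp add: c_def VV_eq)
    show ?thesis using ab(4) cab unfolding arc_iff by auto
  qed
  have "8 * n + 1 \<le> 3 * (\<Sum>y<n. c 0 y + c 1 y + c 2 y)"
    by (rule abstract_lb[OF n B D T]) auto
  then show ?thesis by (simp add: weight_eq c_def)
qed

definition gl :: "nat \<Rightarrow> nat \<Rightarrow> nat \<Rightarrow> nat set" where
  "gl n y x = (if n mod 3 \<noteq> 1 \<and> y = n-2 then (if x=0 then {1,2,3} else if x=1 then {} else {1})
     else if n mod 3 \<noteq> 1 \<and> y = n-1 then (if x=0 then {} else {1})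
     else if y mod 3 = 0 then {1}
     else if y mod 3 = 1 then (if x=0 then {1} else if x=1 then {2,3} else {})
     else (if x=1 then {} else {1}))"

definition gf :: "nat \<Rightarrow> nat \<times> nat \<Rightarrow> nat set" where
  "gf n v = (case v of (x,y) \<Rightarrow> if x < 3 \<and> y < n then gl n y x else {})"

definition ns :: "nat \<Rightarrow> nat \<Rightarrow> bool" where
  "ns n y = (\<not> (n mod 3 \<noteq> 1 \<and> (y = n-2 \<or> y = n-1)))"

lemma gl_ns: "ns n y \<Longrightarrow> gl n y x = (if y mod 3 = 0 then {1}
     else if y mod 3 = 1 then (if x=0 then {1} else if x=1 then {2,3} else {})
     else (if x=1 then {} else {1}))"
  by (auto simp: gl_def ns_def)

lemma gl_s2: "n mod 3 \<noteq> 1 \<Longrightarrow> gl n (n-2) x = (if x=0 then {1,2,3} else if x=1 then {} else {1})"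
  by (simp add: gl_def)

lemma gl_s1: "n mod 3 \<noteq> 1 \<Longrightarrow> n \<ge> 3 \<Longrightarrow> gl n (n-1) x = (if x=0 then {} else {1})"
proof -
  assume a: "n mod 3 \<noteq> 1" "n \<ge> 3"
  then have "n - 1 \<noteq> n - 2" by arith
  then show ?thesis using a by (simp add: gl_def)
qed

lemma gf_in: "x < 3 \<Longrightarrow> y < n \<Longrightarrow> gf n (x,y) = gl n y x"
  by (simp add: gf_def)

lemma gl_sub: "gl n y x \<subseteq> {1..3}"
  by (auto simp: gl_def)

lemma gl_ns0: "ns n y \<Longrightarrow> gl n y 0 = {1}"
  by (simp add: gl_ns)

lemma arcR: "x < 3 \<Longrightarrow> y + 1 < n \<Longrightarrow> ((x,y),(x,y+1)) \<in> AA n"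
  by (simp add: arc_iff)
lemma arcL: "x < 3 \<Longrightarrow> 0 < y \<Longrightarrow> y < n \<Longrightarrow> ((x,y-1),(x,y)) \<in> AA n"
  by (auto simp: arc_iff)
lemma arcD: "x + 1 < 3 \<Longrightarrow> y < n \<Longrightarrow> ((x,y),(x+1,y)) \<in> AA n"
  by (simp add: arc_iff)

lemma full3: "{1..3::nat} \<subseteq> {2,3} \<union> {1}" "{1..3::nat} \<subseteq> {1} \<union> {2,3}" "{1..3::nat} \<subseteq> {1,2,3} \<union> {1,2,3}"
  by auto

lemma m21: "y mod 3 = (2::nat) \<Longrightarrow> y \<ge> 1 \<and> (y - 1) mod 3 = 1"
proof -
  assume a: "y mod 3 = 2"
  have "y = 3 * (y div 3) + 2" using a by (metis div_mult_mod_eq add.commute mult.commute)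
  then have "y - 1 = 3 * (y div 3) + 1" by arith
  then show ?thesis using a by (simp; arith)
qed
lemma m10: "y mod 3 = (1::nat) \<Longrightarrow> y \<ge> 1 \<and> (y - 1) mod 3 = 0"
proof -
  assume a: "y mod 3 = 1"
  have "y = 3 * (y div 3) + 1" using a by (metis div_mult_mod_eq add.commute mult.commute)
  then have "y - 1 = 3 * (y div 3)" by arith
  then show ?thesis using a by (simp; arith)
qed
lemma m20: "y mod 3 = (2::nat) \<Longrightarrow> (y + 1) mod 3 = 0"
  by (simp add: mod_Suc)

lemma total_gf:
  assumes n: "n \<ge> 3"
  shows "total_rainbow_dom (VV n) (AA n) 3 (gf n)"
proof -
  have outside: "\<forall>v. v \<notin> VV n \<longrightarrow> gf n v = {}"
    by (auto simp: gf_def VV_eq)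
  have subs: "\<forall>v\<in>VV n. gf n v \<subseteq> {1..3}"
    using gl_sub by (auto simp: gf_def VV_eq)
  have inU: "gf n u \<subseteq> (\<Union>w\<in>in_nbrs (AA n) v \<inter> VV n. gf n w)"
    if "(u, v) \<in> AA n" for u v
  proof -
    obtain a b c d where uv: "u = (a,b)" "v = (c,d)" by (cases u, cases v) auto
    have "u \<in> in_nbrs (AA n) v \<inter> VV n" using that unfolding uv arc_iff
      by (auto simp: in_nbrs_def VV_eq uv arc_iff)
    then show ?thesis by blast
  qed
  have Usub: "(\<Union>w\<in>in_nbrs (AA n) v \<inter> VV n. gf n w) \<subseteq> {1..3}" for v
    using subs by blast
  have dom: "(\<Union>w\<in>in_nbrs (AA n) (x,y) \<inter> VV n. gf n w) = {1..3}"
    if xy: "x < 3" "y < n" and e: "gl n y x = {}" for x y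
  proof -
    have "\<exists>u1 u2. (u1,(x,y)) \<in> AA n \<and> (u2,(x,y)) \<in> AA n \<and> {1..3} \<subseteq> gf n u1 \<union> gf n u2"
    proof (cases "ns n y")
      case False
      then have nm: "n mod 3 \<noteq> 1" and yy: "y = n-2 \<or> y = n-1" by (auto simp: ns_def)
      have g: "gf n (0,n-2) = {1,2,3}" using n nm by (simp add: gf_def gl_def)
      from yy show ?thesis
      proof
        assume y2: "y = n-2"
        then have x1: "x = 1" using e xy gl_s2[OF nm, of x] by (cases "x = 0"; cases "x = 1"; simp)
        have a: "((0,n-2),(x,y)) \<in> AA n" using n x1 y2 by (simp add: arc_iff)
        show ?thesis using a g full3(3) by blast
      next
        assume y1: "y = n-1"
        then have x0: "x = 0" using e xy gl_s1[OF nm n, of x] by (cases "x = 0"; simp)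
        have a: "((0,n-2),(x,y)) \<in> AA n" using n x0 y1 by (simp add: arc_iff)
        show ?thesis using a g full3(3) by blast
      qed
    next
      case True
      have e': "gl n y x = {}" by fact
      consider "y mod 3 = 0" | "y mod 3 = 1" | "y mod 3 = 2" by arith
      then show ?thesis
      proof cases
        case 1
        have "gl n y x = {1}" using gl_ns[OF True, of x] 1 by simp
        then show ?thesis using e' by simp
      next
        case 2
        then have x2: "x = 2" using e' gl_ns[OF True, of x] xy by (cases "x = 0"; cases "x = 1"; simp)
        have y1: "y \<ge> 1" "(y - 1) mod 3 = 0" using m10[OF 2] by auto
        have nsy: "ns n (y-1)" using True xy y1 by (auto simp: ns_def)
        have g1: "gf n (1,y) = {2,3}" using gl_ns[OF True, of 1] 2 gf_in[of 1 y n] xy by simp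
        have g2: "gf n (2,y-1) = {1}" using gl_ns[OF nsy, of 2] y1 gf_in[of 2 "y-1" n] xy by simp
        have a1: "((1,y),(x,y)) \<in> AA n" using xy x2 by (simp add: arc_iff)
        have a2: "((2,y-1),(x,y)) \<in> AA n" using arcL[of 2 y n] xy x2 y1 by simp
        show ?thesis using a1 a2 g1 g2 full3(1) by blast
      next
        case 3
        then have x1: "x = 1" using e' gl_ns[OF True, of x] xy by (cases "x = 0"; cases "x = 1"; simp)
        have y1: "y \<ge> 1" "(y - 1) mod 3 = 1" using m21[OF 3] by auto
        have nsy: "ns n (y-1)" using True xy y1 by (auto simp: ns_def)
        have g1: "gf n (0,y) = {1}" using gl_ns[OF True, of 0] 3 gf_in[of 0 y n] xy by simp
        have g2: "gf n (1,y-1) = {2,3}" using gl_ns[OF nsy, of 1] y1 gf_in[of 1 "y-1" n] xy by simp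
        have a1: "((0,y),(x,y)) \<in> AA n" using arcD[of 0 y n] xy x1 by simp
        have a2: "((1,y-1),(x,y)) \<in> AA n" using arcL[of 1 y n] xy x1 y1 by simp
        show ?thesis using a1 a2 g1 g2 full3(2) by blast
      qed
    qed
    then obtain u1 u2 where "(u1,(x,y)) \<in> AA n" "(u2,(x,y)) \<in> AA n" "{1..3} \<subseteq> gf n u1 \<union> gf n u2"
      by blast
    then have "{1..3} \<subseteq> (\<Union>w\<in>in_nbrs (AA n) (x,y) \<inter> VV n. gf n w)"
      using inU by blast
    then show ?thesis using Usub by blast
  qed
  have tot: "\<exists>u\<in>VV n. u \<noteq> (x,y) \<and> gf n u \<noteq> {} \<and> ((u, (x,y)) \<in> AA n \<or> ((x,y), u) \<in> AA n)"
    if xy: "x < 3" "y < n" and ne: "gl n y x \<noteq> {}" for x y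
  proof -
    have "\<exists>a b. (((a,b),(x,y)) \<in> AA n \<or> ((x,y),(a,b)) \<in> AA n) \<and> gl n b a \<noteq> {}"
    proof (cases "ns n y")
      case False
      then have nm: "n mod 3 \<noteq> 1" and yy: "y = n-2 \<or> y = n-1" by (auto simp: ns_def)
      from yy show ?thesis
      proof
        assume y2: "y = n-2"
        then have x02: "x = 0 \<or> x = 2" using ne xy gl_s2[OF nm, of x] by (cases "x = 0"; cases "x = 1"; simp)
        have nsy: "ns n (n-3)" using n by (auto simp: ns_def)
        have g0: "gl n (n-3) 0 = {1}" using gl_ns0[OF nsy] .
        have g2: "gl n (n-1) 2 = {1}" using gl_s1[OF nm n, of 2] by simp
        from x02 show ?thesis
        proof
          assume x0: "x = 0"
          have "((0,n-3),(x,y)) \<in> AA n" using n x0 y2 by (simp add: arc_iff)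
          then show ?thesis using g0 by blast
        next
          assume x2: "x = 2"
          have "((x,y),(2,n-1)) \<in> AA n" using n x2 y2 by (simp add: arc_iff)
          then show ?thesis using g2 by blast
        qed
      next
        assume y1: "y = n-1"
        then have x12: "x = 1 \<or> x = 2" using ne xy gl_s1[OF nm n, of x] by (cases "x = 0"; simp; arith)
        have g1: "gl n (n-1) 1 = {1}" "gl n (n-1) 2 = {1}" using gl_s1[OF nm n] by auto
        from x12 show ?thesis
        proof
          assume x1: "x = 1"
          have "((x,y),(2,n-1)) \<in> AA n" using n x1 y1 by (simp add: arc_iff)
          then show ?thesis using g1 by blast
        next
          assume x2: "x = 2"
          have "((1,n-1),(x,y)) \<in> AA n" using n x2 y1 by (simp add: arc_iff)
          then show ?thesis using g1 by blast
        qed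
      qed
    next
      case True
      consider "y mod 3 = 0" | "y mod 3 = 1" | "y mod 3 = 2" by arith
      then show ?thesis
      proof cases
        case 1
        have g: "gl n y 0 = {1}" "gl n y 1 = {1}" using gl_ns[OF True] 1 by auto
        have a01: "((0,y),(1,y)) \<in> AA n" using arcD[of 0 y n] xy by simp
        have a12: "((1,y),(2,y)) \<in> AA n" using xy by (simp add: arc_iff)
        have "x = 0 \<or> x = 1 \<or> x = 2" using xy by arith
        then show ?thesis
        proof (elim disjE)
          assume "x = 0" then show ?thesis using g a01 by blast
        next
          assume "x = 1" then show ?thesis using g a01 by blast
        next
          assume "x = 2" then show ?thesis using g a12 by blast
        qed
      next
        case 2
        have g: "gl n y 0 = {1}" "gl n y 1 = {2,3}" using gl_ns[OF True] 2 by auto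
        have a01: "((0,y),(1,y)) \<in> AA n" using arcD[of 0 y n] xy by simp
        have "x = 0 \<or> x = 1" using xy ne gl_ns[OF True, of x] 2 by (cases "x = 0"; cases "x = 1"; simp)
        then show ?thesis
        proof (elim disjE)
          assume "x = 0" then show ?thesis using g a01 by blast
        next
          assume "x = 1" then show ?thesis using g a01 by blast
        qed
      next
        case 3
        have x02: "x = 0 \<or> x = 2" using xy ne gl_ns[OF True, of x] 3 by (cases "x = 0"; cases "x = 1"; simp)
        from x02 show ?thesis
        proof
          assume x0: "x = 0"
          have y1: "y \<ge> 1" "(y - 1) mod 3 = 1" using m21[OF 3] by auto
          have nsy: "ns n (y-1)" using True xy y1 by (auto simp: ns_def)
          have "((0,y-1),(x,y)) \<in> AA n" using arcL[of 0 y n] xy x0 y1 by simp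
          then show ?thesis using gl_ns0[OF nsy] by blast
        next
          assume x2: "x = 2"
          have yn: "y + 1 < n"
          proof (rule ccontr)
            assume "\<not> y + 1 < n"
            then have "y = n - 1" using xy by simp
            moreover have "n mod 3 = 1" using True \<open>y = n - 1\<close> by (auto simp: ns_def)
            then have "(n - 1) mod 3 = 0" using m10 by blast
            ultimately show False using 3 by simp
          qed
          have g: "gl n (y+1) 2 = {1}"
          proof (cases "ns n (y+1)")
            case True
            have "(y + 1) mod 3 = 0" using m20[OF 3] by auto
            then show ?thesis using gl_ns[OF True, of 2] by simp
          next
            case False
            then have nm: "n mod 3 \<noteq> 1" and yy: "y + 1 = n-2 \<or> y + 1 = n-1" by (auto simp: ns_def)
            from yy show ?thesis
            proof
              assume "y + 1 = n - 2" then show ?thesis using gl_s2[OF nm, of 2] by simp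
            next
              assume "y + 1 = n - 1" then show ?thesis using gl_s1[OF nm n, of 2] by simp
            qed
          qed
          have "((x,y),(2,y+1)) \<in> AA n" using arcR[of 2 y n] x2 yn by simp
          then show ?thesis using g by blast
        qed
      qed
    qed
    then obtain a b where ab: "((a,b),(x,y)) \<in> AA n \<or> ((x,y),(a,b)) \<in> AA n" "gl n b a \<noteq> {}" by blast
    have "a < 3" "b < n" "(a,b) \<noteq> (x,y)" using ab(1) unfolding arc_iff by auto
    then show ?thesis using ab by (intro bexI[of _ "(a,b)"]) (auto simp: VV_eq gf_in)
  qed
  show ?thesis
    unfolding total_rainbow_dom_def rainbow_dom_def
    using outside subs dom tot by (auto simp: VV_eq gf_in)
qed

definition pw :: "nat \<Rightarrow> nat" where "pw y = (if y mod 3 = 2 then 2 else 3)"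

lemma pw_sum: "(\<Sum>y<3*k. pw y) = 8 * k"
proof (induction k)
  case 0 then show ?case by simp
next
  case (Suc k)
  have e: "3 * Suc k = Suc (Suc (Suc (3 * k)))" by simp
  have p: "pw (3*k) = 3" "pw (Suc (3*k)) = 3" "pw (Suc (Suc (3*k))) = 2"
    by (simp_all add: pw_def mod_Suc)
  show ?case unfolding e using Suc p by simp
qed

lemma pw_sum1: "(\<Sum>y<3*k+1. pw y) = 8 * k + 3"
  using pw_sum[of k] by (simp add: pw_def)

lemma cw_ns: "ns n y \<Longrightarrow> card (gl n y 0) + card (gl n y 1) + card (gl n y 2) = pw y"
proof -
  assume a: "ns n y"
  have "y mod 3 = 0 \<or> y mod 3 = 1 \<or> y mod 3 = 2" by arith
  then show ?thesis by (elim disjE) (simp_all add: gl_ns[OF a] pw_def)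
qed

lemma weight_gf:
  assumes n: "n \<ge> 3"
  shows "rd_weight (VV n) (gf n) = (8 * n + 3) div 3"
proof -
  define h where "h y = card (gl n y 0) + card (gl n y 1) + card (gl n y 2)" for y
  have W: "rd_weight (VV n) (gf n) = (\<Sum>y<n. h y)"
    unfolding weight_eq h_def by (rule sum.cong) (auto simp: gf_in)
  show ?thesis
  proof (cases "n mod 3 = 1")
    case True
    obtain k where k: "n = 3*k+1" using True div_mult_mod_eq[of n 3] by (metis add.commute mult.commute)
    have hy: "h y = pw y" for y
    proof -
      have "ns n y" using True by (simp add: ns_def)
      then show ?thesis unfolding h_def by (rule cw_ns)
    qed
    have "(\<Sum>y<n. h y) = (\<Sum>y<n. pw y)" using hy by simp
    also have "\<dots> = 8 * k + 3" unfolding k by (rule pw_sum1)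
    also have "8 * n + 3 = 3 * (8 * k + 3) + 2" using k by simp
    then have "8 * k + 3 = (8 * n + 3) div 3" by simp
    finally show ?thesis using W by simp
  next
    case False
    define m where "m = n - 2"
    have nm: "n = m + 2" using n by (simp add: m_def)
    have sp: "(\<Sum>y<n. h y) = (\<Sum>y<m. h y) + h m + h (m+1)"
      unfolding nm by simp
    have hm: "h m = 4" using gl_s2[OF False] by (simp add: h_def m_def)
    have m1: "m + 1 = n - 1" using nm by simp
    have hm1: "h (m+1) = 2" unfolding m1 using gl_s1[OF False n] by (simp add: h_def)
    have hy: "h y = pw y" if "y < m" for y
    proof -
      have "y \<noteq> n - 2" "y \<noteq> n - 1" using that by (simp_all add: m_def)
      then have "ns n y" by (simp add: ns_def)
      then show ?thesis unfolding h_def by (rule cw_ns)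
    qed
    have hs: "(\<Sum>y<m. h y) = (\<Sum>y<m. pw y)" using hy by (intro sum.cong) auto
    show ?thesis
    proof (cases "n mod 3 = 2")
      case True
      obtain k where k: "n = 3*k+2" using True div_mult_mod_eq[of n 3] by (metis add.commute mult.commute)
      have "m = 3 * k" using k nm by simp
      then have "(\<Sum>y<m. pw y) = 8 * k" using pw_sum by simp
      moreover have "8 * n + 3 = 3 * (8 * k + 6) + 1" using k by simp
      ultimately show ?thesis using W sp hm hm1 hs by simp
    next
      case F2: False
      then have "n mod 3 = 0" using False by arith
      then have n3: "n = 3 * (n div 3)" using div_mult_mod_eq[of n 3] by simp
      define k where "k = n div 3 - 1"
      have k: "n = 3*k+3" using n3 n unfolding k_def by arith
      have "m = 3 * k + 1" using k nm by simp
      then have "(\<Sum>y<m. pw y) = 8 * k + 3" using pw_sum1 by simp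
      moreover have "8 * n + 3 = 3 * (8 * k + 9)" using k by simp
      ultimately show ?thesis using W sp hm hm1 hs by simp
    qed
  qed
qed

lemma ceil_eq: "\<lceil>8 * real n / 3\<rceil> = int ((8 * n + 2) div 3)"
proof -
  define q where "q = (8 * n + 2) div 3"
  define r where "r = (8 * n + 2) mod 3"
  have qr: "8 * n + 2 = 3 * q + r" "r < 3" unfolding q_def r_def by simp_all
  have qr': "8 * real n + 2 = 3 * real q + real r" using qr(1)
    by (metis of_nat_add of_nat_mult of_nat_numeral)
  have r3: "real r \<le> 2" using qr(2) by simp
  show ?thesis unfolding q_def[symmetric]
  proof (rule ceiling_unique)
    show "real_of_int (int q) - 1 < 8 * real n / 3" using qr' r3 by simp
    have "8 * real n \<le> 3 * real q" using qr' r3 by linarith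
    then show "8 * real n / 3 \<le> real_of_int (int q)" by simp
  qed
qed

lemma formula: "(if n mod 3 = 0 then nat \<lceil>8 * real n / 3\<rceil> + 1 else nat \<lceil>8 * real n / 3\<rceil>) = (8 * n + 3) div 3"
  unfolding ceil_eq nat_int by presburger

lemma gamma_eq:
  assumes n: "n \<ge> 3"
  shows "gamma_trk (VV n) (AA n) 3 = (8 * n + 3) div 3"
proof -
  define S where "S = {rd_weight (VV n) f | f. total_rainbow_dom (VV n) (AA n) 3 f}"
  have mem: "(8 * n + 3) div 3 \<in> S"
    unfolding S_def using total_gf[OF n] weight_gf[OF n] by (metis (mono_tags, lifting) mem_Collect_eq)
  have low: "(8 * n + 3) div 3 \<le> w" if wS: "w \<in> S" for w
  proof -
    obtain f where f: "w = rd_weight (VV n) f" "total_rainbow_dom (VV n) (AA n) 3 f"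
      using wS unfolding S_def by blast
    have "8 * n + 1 \<le> 3 * w" using lower[of n f] f n by simp
    then have "(8 * n + 3) div 3 \<le> (3 * w + 2) div 3" by (intro div_le_mono) simp
    also have "\<dots> = w" by simp
    finally show ?thesis .
  qed
  have fin: "finite S"
  proof (rule finite_subset)
    show "S \<subseteq> {..3 * card (VV n)}"
    proof
      fix w assume "w \<in> S"
      then obtain f where f: "w = rd_weight (VV n) f" "total_rainbow_dom (VV n) (AA n) 3 f"
        unfolding S_def by blast
      have "\<forall>v\<in>VV n. f v \<subseteq> {1..3}" using f(2) by (simp add: total_rainbow_dom_def rainbow_dom_def)
      then have "\<forall>v\<in>VV n. card (f v) \<le> 3" using card_mono[of "{1..3::nat}"] by fastforce
      then have "rd_weight (VV n) f \<le> card (VV n) * 3"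
        unfolding rd_weight_def using sum_bounded_above[of "VV n" "\<lambda>v. card (f v)" 3] by simp
      then show "w \<in> {..3 * card (VV n)}" using f(1) by simp
    qed
  qed simp
  have "Min S = (8 * n + 3) div 3" using Min_eqI[OF fin low mem] .
  then show ?thesis unfolding gamma_trk_def S_def .
qed

theorem proposition4p12:
  fixes n :: nat
  assumes "n \<ge> 3"
  shows "gamma_trk (cart_verts (path_verts 3) (path_verts n))
                   (cart_arcs (path_verts 3) (path_arcs 3) (path_verts n) (path_arcs n)) 3
         = (if n mod 3 = 0 then nat \<lceil>8 * real n / 3\<rceil> + 1 else nat \<lceil>8 * real n / 3\<rceil>)"
  unfolding formula using gamma_eq[OF assms] .

end
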